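(* Let $\mathscr{H}$ be a Hilbert space and let $U \in \mathcal{B}(\mathscr{H})$ be a unitary operator whose spectrum satisfies $\mathrm{sp}(U) \subset C_k$ for some $k \in \{1,2,3,4\}$. Then $U$ cannot be written as the product of three symmetries in $\mathcal{B}(\mathscr{H})$.
   Context: $\mathcal{B}(\mathscr{H})$ is the algebra of bounded operators on $\mathscr{H}$; a symmetry is a self-adjoint unitary. For $1 \le k \le 4$, $C_k := \{\exp(2\pi i\alpha) : \tfrac{k-1}{4} < \alpha < \tfrac{k}{4}\}$, the four connected components of $S^1 \setminus \{1, i, -1, -i\}$. *)

theory Defs
  imports "HOL-Analysis.Analysis"
begin

text \<open>Complex Hilbert spaces (not available in the distribution): a Banach space
  with a complex scalar multiplication extending the real one, and a complex inner
  product (antilinear in the first argument) inducing the norm.\<close>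

class chilbert_space = banach +
  fixes scaleC :: "complex \<Rightarrow> 'a \<Rightarrow> 'a"
    and cinner :: "'a \<Rightarrow> 'a \<Rightarrow> complex"
  assumes scaleC_of_real: "scaleC (complex_of_real r) x = scaleR r x"
    and scaleC_add_right: "scaleC a (x + y) = scaleC a x + scaleC a y"
    and scaleC_add_left: "scaleC (a + b) x = scaleC a x + scaleC b x"
    and scaleC_scaleC: "scaleC a (scaleC b x) = scaleC (a * b) x"
    and scaleC_one: "scaleC 1 x = x"
    and cinner_commute: "cinner x y = cnj (cinner y x)"
    and cinner_add_left: "cinner (x + y) z = cinner x z + cinner y z"
    and cinner_scaleC_left: "cinner (scaleC a x) y = cnj a * cinner x y"
    and cinner_norm: "cinner x x = complex_of_real ((norm x)\<^sup>2)"

definition bounded_op :: "('a::chilbert_space \<Rightarrow> 'a) \<Rightarrow> bool" where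
  "bounded_op T \<longleftrightarrow> (\<forall>x y. T (x + y) = T x + T y) \<and> (\<forall>c x. T (scaleC c x) = scaleC c (T x))
     \<and> (\<exists>K. \<forall>x. norm (T x) \<le> norm x * K)"

definition is_adjoint :: "('a::chilbert_space \<Rightarrow> 'a) \<Rightarrow> ('a \<Rightarrow> 'a) \<Rightarrow> bool" where
  "is_adjoint T S \<longleftrightarrow> (\<forall>x y. cinner (T x) y = cinner x (S y))"

definition unitary_op :: "('a::chilbert_space \<Rightarrow> 'a) \<Rightarrow> bool" where
  "unitary_op U \<longleftrightarrow> bounded_op U \<and> (\<exists>V. is_adjoint U V \<and> U \<circ> V = id \<and> V \<circ> U = id)"

definition symmetry_op :: "('a::chilbert_space \<Rightarrow> 'a) \<Rightarrow> bool" where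
  "symmetry_op S \<longleftrightarrow> unitary_op S \<and> is_adjoint S S"

definition op_spectrum :: "('a::chilbert_space \<Rightarrow> 'a) \<Rightarrow> complex set" where
  "op_spectrum T = {l. \<not> (\<exists>V. bounded_op V \<and> V \<circ> (\<lambda>x. T x - scaleC l x) = id
                                   \<and> (\<lambda>x. T x - scaleC l x) \<circ> V = id)}"

definition arcC :: "nat \<Rightarrow> complex set" where
  "arcC k = {exp (2 * pi * \<i> * complex_of_real a) | a. (real k - 1) / 4 < a \<and> a < real k / 4}"

end

theory Submission
  imports Defs
begin


lemma scaleC_zero_right [simp]: "scaleC a (0::'a::chilbert_space) = 0"
proof -
  have "scaleC a (0::'a) = scaleC a 0 + scaleC a 0" by (metis add.right_neutral scaleC_add_right)
  then show ?thesis by simp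
qed

lemma scaleC_zero_left [simp]: "scaleC 0 (x::'a::chilbert_space) = 0"
  by (metis scaleC_of_real of_real_0 scale_zero_left)

lemma scaleC_minus_right: "scaleC a (- (x::'a::chilbert_space)) = - scaleC a x"
  by (metis add.right_inverse add_eq_0_iff scaleC_add_right scaleC_zero_right)

lemma scaleC_diff_right: "scaleC a ((x::'a::chilbert_space) - y) = scaleC a x - scaleC a y"
  unfolding diff_conv_add_uminus by (simp only: scaleC_add_right scaleC_minus_right)

lemma scaleC_minus_left: "scaleC (- a) (x::'a::chilbert_space) = - scaleC a x"
  by (metis add.right_inverse add_eq_0_iff scaleC_add_left scaleC_zero_left)

lemma scaleC_diff_left: "scaleC (a - b) (x::'a::chilbert_space) = scaleC a x - scaleC b x"
  by (metis diff_conv_add_uminus scaleC_add_left scaleC_minus_left)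

lemma cinner_add_right: "cinner (x::'a::chilbert_space) (y + z) = cinner x y + cinner x z"
  by (metis cinner_add_left cinner_commute complex_cnj_add)

lemma cinner_scaleC_right: "cinner (x::'a::chilbert_space) (scaleC a y) = a * cinner x y"
  by (metis cinner_commute cinner_scaleC_left complex_cnj_cnj complex_cnj_mult)

lemma cinner_zero_left [simp]: "cinner 0 (x::'a::chilbert_space) = 0"
  by (metis add_cancel_right_left cinner_add_left add.right_neutral)

lemma cinner_zero_right [simp]: "cinner (x::'a::chilbert_space) 0 = 0"
  by (metis cinner_commute cinner_zero_left complex_cnj_zero)

lemma cinner_minus_left: "cinner (- x) (y::'a::chilbert_space) = - cinner x y"
  by (metis add.right_inverse add_eq_0_iff cinner_add_left cinner_zero_left)

lemma cinner_minus_right: "cinner x (- (y::'a::chilbert_space)) = - cinner x y"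
  by (metis add.right_inverse add_eq_0_iff cinner_add_right cinner_zero_right)

lemma cinner_diff_left: "cinner (x - y) (z::'a::chilbert_space) = cinner x z - cinner y z"
  unfolding diff_conv_add_uminus by (simp only: cinner_add_left cinner_minus_left)

lemma cinner_diff_right: "cinner x (y - (z::'a::chilbert_space)) = cinner x y - cinner x z"
  unfolding diff_conv_add_uminus by (simp only: cinner_add_right cinner_minus_right)

lemma cinner_self_zero: "cinner x (x::'a::chilbert_space) = 0 \<longleftrightarrow> x = 0"
  by (simp add: cinner_norm)

lemma norm_sq_cinner: "(norm (x::'a::chilbert_space))\<^sup>2 = Re (cinner x x)"
  by (simp add: cinner_norm)

lemma cinner_ext: assumes "\<And>z. cinner z u = cinner z (v::'a::chilbert_space)" shows "u = v"
proof -
  have "cinner (u - v) (u - v) = 0" using assms[of "u-v"] by (simp add: cinner_diff_right)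
  then show ?thesis by (simp add: cinner_self_zero)
qed

lemma norm_scaleC: "norm (scaleC a (x::'a::chilbert_space)) = cmod a * norm x"
proof -
  have "cinner (scaleC a x) (scaleC a x) = cnj a * a * cinner x x"
    by (simp add: cinner_scaleC_left cinner_scaleC_right)
  also have "cnj a * a = complex_of_real ((cmod a)\<^sup>2)" by (metis complex_norm_square mult.commute)
  finally have "complex_of_real ((norm (scaleC a x))\<^sup>2) = complex_of_real ((cmod a)\<^sup>2 * (norm x)\<^sup>2)"
    by (simp only: cinner_norm of_real_mult)
  then have "(norm (scaleC a x))\<^sup>2 = ((cmod a) * norm x)\<^sup>2"
    by (simp only: of_real_eq_iff power_mult_distrib)
  then show ?thesis by (simp add: power2_eq_iff_nonneg)
qed

lemma cinner_cnj_self: "cnj (cinner x (x::'a::chilbert_space)) = cinner x x"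
  by (simp add: cinner_norm)



lemma quad_nonneg_disc:
  fixes a c N :: real
  assumes "a \<ge> 0" "c \<ge> 0" "N \<ge> 0" and H: "\<And>t. 0 \<le> a + 2 * t * N + t\<^sup>2 * N * c"
  shows "N \<le> a * c"
proof (cases "N = 0")
  case True then show ?thesis using assms by simp
next
  case False
  then have N: "N > 0" using assms by simp
  show ?thesis
  proof (cases "c = 0")
    case True
    have "0 \<le> a + 2 * (-(a+1)/(2*N)) * N" using H[of "-(a+1)/(2*N)"] True by simp
    also have "\<dots> = -1" using N by (simp add: field_simps)
    finally show ?thesis by simp
  next
    case False
    then have c: "c > 0" using assms by simp
    have "0 \<le> a + 2 * (-1/c) * N + (-1/c)\<^sup>2 * N * c" using H[of "-1/c"] .
    also have "\<dots> = a - N / c" using c by (simp add: field_simps power2_eq_square)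
    finally show ?thesis using c by (simp add: field_simps)
  qed
qed

lemma gen_cs:
  fixes B :: "'a::chilbert_space \<Rightarrow> 'a"
  assumes add: "\<And>x y. B (x+y) = B x + B y" and sc: "\<And>c x. B (scaleC c x) = scaleC c (B x)"
    and herm: "\<And>x y. cinner x (B y) = cinner (B x) y"
    and pos: "\<And>x. 0 \<le> Re (cinner x (B x))"
  shows "(cmod (cinner x (B y)))\<^sup>2 \<le> Re (cinner x (B x)) * Re (cinner y (B y))"
proof -
  define z where "z = cinner x (B y)"
  define N where "N = (cmod z)\<^sup>2"
  have zz: "cnj z * z = complex_of_real N" "z * cnj z = complex_of_real N"
    unfolding N_def by (metis complex_norm_square mult.commute)+
  have zz3: "\<And>X. z * (cnj z * X) = complex_of_real N * X" "\<And>X. cnj z * (z * X) = complex_of_real N * X"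
    using zz by (metis mult.assoc)+
  have yx: "cinner y (B x) = cnj z"
    unfolding z_def by (metis herm cinner_commute)
  have "0 \<le> Re (cinner x (B x)) + 2 * t * N + t\<^sup>2 * N * Re (cinner y (B y))" for t :: real
  proof -
    define w where "w = complex_of_real t * cnj z"
    define v where "v = x + scaleC w y"
    have "cinner v (B v) = cinner x (B x) + w * z + cnj w * cnj z + cnj w * w * cinner y (B y)"
      unfolding v_def by (simp add: add sc cinner_add_left cinner_add_right cinner_scaleC_left
          cinner_scaleC_right yx z_def algebra_simps)
    also have "\<dots> = cinner x (B x) + complex_of_real (2 * t * N) + complex_of_real (t\<^sup>2 * N) * cinner y (B y)"
      unfolding w_def by (simp add: algebra_simps power2_eq_square zz3)
    finally have "Re (cinner v (B v)) = Re (cinner x (B x)) + 2 * t * N + t\<^sup>2 * N * Re (cinner y (B y))"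
      by simp
    then show ?thesis using pos[of v] by simp
  qed
  then have "N \<le> Re (cinner x (B x)) * Re (cinner y (B y))"
    by (intro quad_nonneg_disc) (auto simp: pos N_def)
  then show ?thesis unfolding N_def z_def .
qed

lemma cs: "cmod (cinner x y) \<le> norm x * norm (y::'a::chilbert_space)"
proof -
  have "(cmod (cinner x (id y)))\<^sup>2 \<le> Re (cinner x (id x)) * Re (cinner y (id y))"
    by (rule gen_cs) (auto simp: norm_sq_cinner[symmetric])
  also have "\<dots> = (norm x * norm y)\<^sup>2" by (simp add: norm_sq_cinner power_mult_distrib)
  finally show ?thesis by (simp add: power2_le_iff_abs_le)
qed

lemma c_lemma:
  fixes B :: "'a::chilbert_space \<Rightarrow> 'a"
  assumes add: "\<And>x y. B (x+y) = B x + B y" and sc: "\<And>c x. B (scaleC c x) = scaleC c (B x)"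
    and herm: "\<And>x y. cinner x (B y) = cinner (B x) y"
    and pos: "\<And>x. 0 \<le> Re (cinner x (B x))"
    and M: "M > 0" "\<And>x. norm (B x) \<le> M * norm x"
    and L: "L > 0" "\<And>x. norm x \<le> L * norm (B x)"
  shows "(norm x)\<^sup>2 / (M * L\<^sup>2) \<le> Re (cinner x (B x))"
proof (cases "B x = 0")
  case True
  then have "x = 0" using L(2)[of x] by simp
  then show ?thesis by simp
next
  case False
  have e: "cinner x (B (B x)) = complex_of_real ((norm (B x))\<^sup>2)"
    by (simp only: herm cinner_norm)
  have e2: "cmod (cinner x (B (B x))) = (norm (B x))\<^sup>2"
    unfolding e norm_of_real by simp
  have "(cmod (cinner x (B (B x))))\<^sup>2 \<le> Re (cinner x (B x)) * Re (cinner (B x) (B (B x)))"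
    by (rule gen_cs[OF add sc herm pos])
  also have "Re (cinner (B x) (B (B x))) \<le> M * (norm (B x))\<^sup>2"
  proof -
    have "Re (cinner (B x) (B (B x))) \<le> cmod (cinner (B x) (B (B x)))" by (rule complex_Re_le_cmod)
    also have "\<dots> \<le> norm (B x) * norm (B (B x))" by (rule cs)
    also have "\<dots> \<le> norm (B x) * (M * norm (B x))" using M(2)[of "B x"] by (simp add: mult_left_mono)
    finally show ?thesis by (simp add: power2_eq_square mult.commute mult.left_commute)
  qed
  hence "Re (cinner x (B x)) * Re (cinner (B x) (B (B x))) \<le> Re (cinner x (B x)) * (M * (norm (B x))\<^sup>2)"
    using pos by (simp add: mult_left_mono)
  finally have "((norm (B x))\<^sup>2)\<^sup>2 \<le> Re (cinner x (B x)) * M * (norm (B x))\<^sup>2"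
    unfolding e2 by (simp add: mult.assoc)
  then have "(norm (B x))\<^sup>2 \<le> Re (cinner x (B x)) * M"
    using False by (simp add: power2_eq_square)
  moreover have "(norm x)\<^sup>2 \<le> L\<^sup>2 * (norm (B x))\<^sup>2"
    using L(2)[of x] by (metis norm_ge_zero power_mono power_mult_distrib)
  ultimately have "(norm x)\<^sup>2 \<le> L\<^sup>2 * (Re (cinner x (B x)) * M)"
    by (meson L(1) order_trans mult_left_mono zero_le_power2)
  then show ?thesis using M(1) L(1) by (simp add: field_simps)
qed



lemma pos_lemma:
  fixes A :: "'a::chilbert_space \<Rightarrow> 'a"
  assumes add: "\<And>x y. A (x+y) = A x + A y" and sc: "\<And>c x. A (scaleC c x) = scaleC c (A x)"
    and herm: "\<And>x y. cinner x (A y) = cinner (A x) y"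
    and bnd: "\<And>x. norm (A x) \<le> norm x"
    and bb: "\<And>s. 0 \<le> s \<Longrightarrow> s \<le> 1 \<Longrightarrow> \<exists>L>0. \<forall>x. norm x \<le> L * norm (A x + scaleC (complex_of_real s) x)"
  shows "\<exists>\<delta>>0. \<forall>x. \<delta> * (norm x)\<^sup>2 \<le> Re (cinner x (A x))"
proof -
  define g where "g x = Re (cinner x (A x))" for x
  have strict: "\<exists>\<delta>>0. \<forall>x. \<delta> * (norm x)\<^sup>2 \<le> g x + s * (norm x)\<^sup>2"
    if s: "0 \<le> s" "s \<le> 1" and P: "\<forall>x. 0 \<le> g x + s * (norm x)\<^sup>2" for s
  proof -
    define B where "B x = A x + scaleC (complex_of_real s) x" for x
    obtain L where L: "L > 0" "\<And>x. norm x \<le> L * norm (B x)" using bb[OF s] unfolding B_def by blast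
    have Re: "Re (cinner x (B x)) = g x + s * (norm x)\<^sup>2" for x
      by (simp add: B_def g_def cinner_add_right cinner_scaleC_right norm_sq_cinner)
    have "(norm x)\<^sup>2 / (2 * L\<^sup>2) \<le> Re (cinner x (B x))" for x
    proof (rule c_lemma)
      show "B (x + y) = B x + B y" for x y by (simp add: B_def add scaleC_add_right)
      show "B (scaleC c x) = scaleC c (B x)" for c x
        by (simp add: B_def sc scaleC_add_right scaleC_scaleC mult.commute)
      show "cinner x (B y) = cinner (B x) y" for x y
        by (simp add: B_def cinner_add_right cinner_add_left cinner_scaleC_right cinner_scaleC_left herm)
      show "0 \<le> Re (cinner x (B x))" for x using P Re by simp
      show "norm (B x) \<le> 2 * norm x" for x
      proof -
        have "norm (B x) \<le> norm (A x) + norm (scaleC (complex_of_real s) x)"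
          unfolding B_def by (rule norm_triangle_ineq)
        also have "\<dots> = norm (A x) + s * norm x" using s by (simp add: norm_scaleC)
        also have "s * norm x \<le> 1 * norm x" using s by (intro mult_right_mono) auto
        finally show ?thesis using bnd[of x] by simp
      qed
    qed (use L in auto)
    then show ?thesis using L(1) Re by (intro exI[of _ "1 / (2 * L\<^sup>2)"]) auto
  qed
  define T where "T = {s. 0 \<le> s \<and> s \<le> 1 \<and> (\<forall>x. 0 \<le> g x + s * (norm x)\<^sup>2)}"
  have gbound: "- ((norm x)\<^sup>2) \<le> g x" for x
  proof -
    have "\<bar>g x\<bar> \<le> cmod (cinner x (A x))" unfolding g_def by (rule abs_Re_le_cmod)
    also have "\<dots> \<le> norm x * norm (A x)" by (rule cs)
    also have "\<dots> \<le> norm x * norm x" using bnd[of x] by (simp add: mult_left_mono)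
    finally show ?thesis by (simp add: power2_eq_square)
  qed
  have T1: "1 \<in> T" unfolding T_def using gbound by (auto simp: add.commute intro: add_nonneg_eq_0_iff) (metis add.commute le_add_same_cancel1 le_minus_iff add_le_cancel_left neg_le_iff_le diff_ge_0_iff_ge diff_minus_eq_add uminus_add_conv_diff)
  have bdd: "bdd_below T" unfolding T_def by (auto intro: bdd_belowI[of _ 0])
  define s0 where "s0 = Inf T"
  have s0ge: "0 \<le> s0" unfolding s0_def using T1 by (intro cInf_greatest) (auto simp: T_def)
  have s0le: "s0 \<le> 1" unfolding s0_def using T1 bdd by (rule cInf_lower)
  have s0P: "0 \<le> g x + s0 * (norm x)\<^sup>2" for x
  proof (cases "x = 0")
    case True then show ?thesis by (simp add: g_def)
  next
    case False
    then have nx: "(norm x)\<^sup>2 > 0" by simp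
    have "- g x / (norm x)\<^sup>2 \<le> s0" unfolding s0_def using T1
    proof (intro cInf_greatest)
      fix s assume "s \<in> T"
      then have "0 \<le> g x + s * (norm x)\<^sup>2" by (auto simp: T_def)
      then show "- g x / (norm x)\<^sup>2 \<le> s" using nx by (simp add: field_simps)
    qed auto
    then show ?thesis using nx by (simp add: field_simps)
  qed
  have "s0 = 0"
  proof (rule ccontr)
    assume "s0 \<noteq> 0"
    then have pos: "s0 > 0" using s0ge by simp
    obtain \<delta> where d: "\<delta> > 0" "\<And>x. \<delta> * (norm x)\<^sup>2 \<le> g x + s0 * (norm x)\<^sup>2"
      using strict[OF s0ge s0le] s0P by blast
    define s1 where "s1 = max 0 (s0 - \<delta>)"
    have "s1 \<in> T" unfolding T_def
    proof (intro CollectI conjI allI)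
      show "0 \<le> s1" "s1 \<le> 1" using s0le d(1) by (auto simp: s1_def)
      fix x
      have "0 \<le> g x + (s0 - \<delta>) * (norm x)\<^sup>2" using d(2)[of x] by (simp add: algebra_simps)
      moreover have "0 \<le> g x + 0 * (norm x)\<^sup>2" if "s0 - \<delta> \<le> 0"
        using d(2)[of x] that gbound[of x]
      proof -
        have "g x + s0 * (norm x)\<^sup>2 - \<delta> * (norm x)\<^sup>2 \<ge> 0" using d(2)[of x] by simp
        moreover have "s0 * (norm x)\<^sup>2 \<le> \<delta> * (norm x)\<^sup>2" using that by (simp add: mult_right_mono)
        ultimately show ?thesis by simp
      qed
      ultimately show "0 \<le> g x + s1 * (norm x)\<^sup>2" unfolding s1_def by (cases "s0 - \<delta> \<le> 0") (auto simp: max_def)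
    qed
    then have "s0 \<le> s1" unfolding s0_def using bdd by (rule cInf_lower)
    then show False using pos d(1) by (auto simp: s1_def)
  qed
  then obtain \<delta> where "\<delta> > 0" "\<forall>x. \<delta> * (norm x)\<^sup>2 \<le> g x + 0 * (norm x)\<^sup>2"
    using strict[of 0] s0P by auto
  then show ?thesis unfolding g_def by auto
qed



lemma lin_diff:
  fixes U :: "'a::chilbert_space \<Rightarrow> 'a"
  assumes "\<And>x y. U (x+y) = U x + U y"
  shows "U (x - y) = U x - U y"
  by (metis assms add_diff_cancel eq_diff_eq)

lemma re_part_pos:
  fixes U V :: "'a::chilbert_space \<Rightarrow> 'a"
  assumes Uadd: "\<And>x y. U (x+y) = U x + U y" and Usc: "\<And>c x. U (scaleC c x) = scaleC c (U x)"
    and adj: "\<And>x y. cinner (U x) y = cinner x (V y)"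
    and UV: "\<And>x. U (V x) = x" and VU: "\<And>x. V (U x) = x"
    and b: "cmod b = 1"
    and hb: "\<And>l. cmod l = 1 \<Longrightarrow> Re (b * l) \<le> 0 \<Longrightarrow> \<exists>L>0. \<forall>x. norm x \<le> L * norm (U x - scaleC l x)"
  shows "\<exists>\<delta>>0. \<forall>x. \<delta> * (norm x)\<^sup>2 \<le> Re (b * cinner x (U x))"
proof -
  have Vadd: "V (x+y) = V x + V y" for x y
  proof -
    have "V (x+y) = V (U (V x) + U (V y))" by (simp only: UV)
    also have "\<dots> = V (U (V x + V y))" by (simp only: Uadd)
    finally show ?thesis by (simp only: VU)
  qed
  have Vsc: "V (scaleC c x) = scaleC c (V x)" for c x
  proof -
    have "V (scaleC c x) = V (scaleC c (U (V x)))" by (simp only: UV)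
    also have "\<dots> = V (U (scaleC c (V x)))" by (simp only: Usc)
    finally show ?thesis by (simp only: VU)
  qed
  have Udiff: "U (x-y) = U x - U y" for x y by (rule lin_diff[OF Uadd])
  have Vdiff: "V (x-y) = V x - V y" for x y by (rule lin_diff[OF Vadd])
  have adj2: "cinner (V x) y = cinner x (U y)" for x y
  proof -
    have "cinner (V x) y = cnj (cinner y (V x))" by (rule cinner_commute)
    also have "\<dots> = cnj (cinner (U y) x)" by (simp only: adj)
    also have "\<dots> = cinner x (U y)" by (simp only: cinner_commute[of x])
    finally show ?thesis .
  qed
  have nU: "norm (U x) = norm x" for x
  proof -
    have "(norm (U x))\<^sup>2 = (norm x)\<^sup>2" by (simp only: norm_sq_cinner adj VU)
    then show ?thesis by (simp add: power2_eq_iff_nonneg)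
  qed
  have nV: "norm (V x) = norm x" for x
  proof -
    have "(norm (V x))\<^sup>2 = (norm x)\<^sup>2" by (simp only: norm_sq_cinner adj2 UV)
    then show ?thesis by (simp add: power2_eq_iff_nonneg)
  qed
  have bb1: "b * cnj b = 1" "cnj b * b = 1" using b complex_norm_square[of b] by (simp_all add: mult.commute)
  define A where "A x = scaleC (b/2) (U x) + scaleC (cnj b/2) (V x)" for x
  have Aform: "Re (cinner x (A x)) = Re (b * cinner x (U x))" for x
  proof -
    have "cinner x (V x) = cnj (cinner x (U x))" by (metis adj cinner_commute)
    then show ?thesis by (simp add: A_def cinner_add_right cinner_scaleC_right)
  qed
  have "\<exists>\<delta>>0. \<forall>x. \<delta> * (norm x)\<^sup>2 \<le> Re (cinner x (A x))"
  proof (rule pos_lemma)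
    show "A (x + y) = A x + A y" for x y by (simp add: A_def Uadd Vadd scaleC_add_right algebra_simps)
    show "A (scaleC c x) = scaleC c (A x)" for c x
      by (simp add: A_def Usc Vsc scaleC_add_right scaleC_scaleC mult.commute)
    show "cinner x (A y) = cinner (A x) y" for x y
      by (simp add: A_def cinner_add_right cinner_add_left cinner_scaleC_right cinner_scaleC_left adj adj2 add.commute)
    show "norm (A x) \<le> norm x" for x
    proof -
      have "norm (A x) \<le> norm (scaleC (b/2) (U x)) + norm (scaleC (cnj b/2) (V x))"
        unfolding A_def by (rule norm_triangle_ineq)
      also have "\<dots> = norm x" by (simp add: norm_scaleC nU nV b norm_divide)
      finally show ?thesis .
    qed
    fix s :: real assume s: "0 \<le> s" "s \<le> 1"
    define q where "q = sqrt (1 - s\<^sup>2)"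
    have q2: "q\<^sup>2 = 1 - s\<^sup>2" unfolding q_def using s by (simp add: power_le_one)
    define r1 where "r1 = Complex (-s) q"
    define r2 where "r2 = Complex (-s) (-q)"
    have r12: "r1 + r2 = - 2 * complex_of_real s" "r1 * r2 = 1"
      unfolding r1_def r2_def using q2 by (auto simp: complex_eq_iff power2_eq_square)
    have cr: "cmod r1 = 1" "cmod r2 = 1" unfolding r1_def r2_def cmod_def using q2 by auto
    define l1 where "l1 = cnj b * r1"
    define l2 where "l2 = cnj b * r2"
    have l1: "cmod l1 = 1" "Re (b * l1) \<le> 0" unfolding l1_def using cr b s
      by (auto simp: norm_mult mult.assoc[symmetric] bb1 r1_def)
    have l2: "cmod l2 = 1" "Re (b * l2) \<le> 0" unfolding l2_def using cr b s
      by (auto simp: norm_mult mult.assoc[symmetric] bb1 r2_def)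
    obtain L1 where L1: "L1 > 0" "\<And>x. norm x \<le> L1 * norm (U x - scaleC l1 x)" using hb[OF l1] by blast
    obtain L2 where L2: "L2 > 0" "\<And>x. norm x \<le> L2 * norm (U x - scaleC l2 x)" using hb[OF l2] by blast
    define D1 where "D1 x = U x - scaleC l1 x" for x
    define D2 where "D2 x = U x - scaleC l2 x" for x
    have VD: "V (D1 (D2 x)) = U x - scaleC (l1 + l2) x + scaleC (l1 * l2) (V x)" for x
    proof -
      have "D1 (D2 x) = (U (U x) - scaleC l2 (U x)) - (scaleC l1 (U x) - scaleC (l1*l2) x)"
        by (simp only: D1_def D2_def Udiff Usc scaleC_diff_right scaleC_scaleC)
      then have "V (D1 (D2 x)) = (U x - scaleC l2 x) - (scaleC l1 x - scaleC (l1*l2) (V x))"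
        by (simp only: Vdiff Vsc VU)
      then show ?thesis by (simp add: scaleC_add_left algebra_simps)
    qed
    have c1: "b / 2 * (l1 + l2) = - complex_of_real s"
      unfolding l1_def l2_def using r12 bb1
      by (simp add: distrib_left[symmetric] mult.assoc[symmetric] field_simps)
    have c2: "b / 2 * (l1 * l2) = cnj b / 2"
    proof -
      have "b / 2 * (l1 * l2) = (b * cnj b) * cnj b * (r1 * r2) / 2" unfolding l1_def l2_def
        by (simp add: algebra_simps)
      then show ?thesis using r12 bb1 by simp
    qed
    have ident: "A x + scaleC (complex_of_real s) x = scaleC (b/2) (V (D1 (D2 x)))" for x
    proof -
      have "scaleC (b/2) (V (D1 (D2 x))) = scaleC (b/2) (U x) - scaleC (b / 2 * (l1 + l2)) x + scaleC (b / 2 * (l1 * l2)) (V x)"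
        unfolding VD by (simp add: scaleC_diff_right scaleC_add_right scaleC_scaleC)
      also have "\<dots> = scaleC (b/2) (U x) + scaleC (complex_of_real s) x + scaleC (cnj b/2) (V x)"
        unfolding c1 c2 by (simp add: scaleC_minus_left)
      finally show ?thesis by (simp add: A_def algebra_simps)
    qed
    show "\<exists>L>0. \<forall>x. norm x \<le> L * norm (A x + scaleC (complex_of_real s) x)"
    proof (intro exI[of _ "2 * L1 * L2"] conjI allI)
      show "0 < 2 * L1 * L2" using L1 L2 by simp
      fix x
      have "norm (A x + scaleC (complex_of_real s) x) = norm (D1 (D2 x)) / 2"
        unfolding ident by (simp add: norm_scaleC nV b norm_divide)
      moreover have "norm x \<le> L2 * norm (D2 x)" using L2(2) unfolding D2_def .
      moreover have "norm (D2 x) \<le> L1 * norm (D1 (D2 x))" using L1(2) unfolding D1_def .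
      ultimately have "norm x \<le> L2 * (L1 * norm (D1 (D2 x)))"
        using L2(1) by (meson order_trans mult_left_mono less_imp_le)
      then show "norm x \<le> 2 * L1 * L2 * norm (A x + scaleC (complex_of_real s) x)"
        using \<open>norm (A x + scaleC (complex_of_real s) x) = norm (D1 (D2 x)) / 2\<close>
        by (simp add: algebra_simps)
    qed
  qed
  then show ?thesis using Aform by simp
qed



lemma arc_pos:
  assumes k: "k \<in> {1,2,3,4}" and l: "l \<in> arcC k"
  shows "Re (cnj (\<i>^(k-1)) * l) > 0 \<and> Re (- \<i> * cnj (\<i>^(k-1)) * l) > 0"
proof -
  obtain a where a: "l = exp (2 * pi * \<i> * complex_of_real a)" "(real k - 1) / 4 < a" "a < real k / 4"
    using l unfolding arcC_def by blast
  define t where "t = 2 * pi * a"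
  have lt: "l = cis t" unfolding a(1) t_def cis_conv_exp by (simp add: mult_ac)
  have t1: "(real k - 1) * pi / 2 < t" "t < real k * pi / 2"
  proof -
    have "pi * ((real k - 1)/4) < pi * a" by (rule mult_strict_left_mono[OF a(2) pi_gt_zero])
    moreover have "pi * a < pi * (real k / 4)" by (rule mult_strict_left_mono[OF a(3) pi_gt_zero])
    moreover have "(real k - 1) * pi / 2 = 2 * (pi * ((real k - 1)/4))" "real k * pi / 2 = 2 * (pi * (real k / 4))"
      by simp_all
    ultimately show "(real k - 1) * pi / 2 < t" "t < real k * pi / 2" unfolding t_def by linarith+
  qed
  have Rl: "Re l = cos t" "Im l = sin t" unfolding lt by simp_all
  from k consider "k = 1" | "k = 2" | "k = 3" | "k = 4" by auto
  then show ?thesis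
  proof cases
    case 1
    then have "0 < t" "t < pi/2" using t1 by simp_all
    then show ?thesis using 1 Rl by (simp add: cos_gt_zero sin_gt_zero)
  next
    case 2
    then have "pi/2 < t" "t < pi" using t1 by simp_all
    moreover have "0 < cos (t - pi)" using calculation by (intro cos_gt_zero_pi) auto
    ultimately show ?thesis using 2 Rl by (simp add: sin_gt_zero)
  next
    case 3
    then have "pi < t" "t < 3*pi/2" using t1 by simp_all
    moreover have "0 < cos (t - pi)" using calculation by (intro cos_gt_zero_pi) auto
    moreover have "0 < sin (t - pi)" using calculation by (intro sin_gt_zero) auto
    ultimately show ?thesis using 3 Rl by (simp add: numeral_eq_Suc)
  next
    case 4
    then have "3*pi/2 < t" "t < 2*pi" using t1 by simp_all
    moreover have "0 < cos (t - 2*pi)" using calculation by (intro cos_gt_zero_pi) auto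
    moreover have "0 < sin (t - pi)" using calculation by (intro sin_gt_zero) auto
    moreover have "cos (t - 2*pi) = cos t" by (simp add: cos_diff)
    ultimately show ?thesis using 4 Rl by (simp add: numeral_eq_Suc)
  qed
qed

lemma b1_props:
  assumes k: "k \<in> {1,2,3,4}"
  shows "cmod (cnj (\<i>^(k-1))) = 1" "(cnj (\<i>^(k-1)))\<^sup>2 = 1 \<or> (cnj (\<i>^(k-1)))\<^sup>2 = -1"
  using k by (auto simp: norm_power numeral_eq_Suc power2_eq_square)



lemma sym_facts:
  fixes S :: "'a::chilbert_space \<Rightarrow> 'a"
  assumes "symmetry_op S"
  shows "\<And>x y. S (x+y) = S x + S y" "\<And>c x. S (scaleC c x) = scaleC c (S x)"
    "\<And>x y. cinner (S x) y = cinner x (S y)" "\<And>x. S (S x) = x" "\<And>x. norm (S x) = norm x"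
proof -
  from assms obtain V where lin: "\<forall>x y. S (x+y) = S x + S y" "\<forall>c x. S (scaleC c x) = scaleC c (S x)"
    and adjV: "\<forall>x y. cinner (S x) y = cinner x (V y)" and SV: "S \<circ> V = id"
    and adjS: "\<forall>x y. cinner (S x) y = cinner x (S y)"
    unfolding symmetry_op_def unitary_op_def bounded_op_def is_adjoint_def by blast
  show "\<And>x y. S (x+y) = S x + S y" "\<And>c x. S (scaleC c x) = scaleC c (S x)" using lin by auto
  show adj: "\<And>x y. cinner (S x) y = cinner x (S y)" using adjS by auto
  have VS: "V y = S y" for y
    by (rule cinner_ext) (metis adjV adjS)
  show SS: "\<And>x. S (S x) = x" using SV VS by (metis comp_apply id_apply)
  show "norm (S x) = norm x" for x
  proof -
    have "(norm (S x))\<^sup>2 = (norm x)\<^sup>2" by (simp only: norm_sq_cinner adj SS)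
    then show ?thesis by (simp add: power2_eq_iff_nonneg)
  qed
qed

lemma unit_facts:
  fixes U :: "'a::chilbert_space \<Rightarrow> 'a"
  assumes "unitary_op U"
  obtains V where "\<And>x y. U (x+y) = U x + U y" "\<And>c x. U (scaleC c x) = scaleC c (U x)"
    "\<And>x y. cinner (U x) y = cinner x (V y)" "\<And>x. U (V x) = x" "\<And>x. V (U x) = x"
proof -
  from assms obtain V where "\<forall>x y. U (x+y) = U x + U y" "\<forall>c x. U (scaleC c x) = scaleC c (U x)"
    "\<forall>x y. cinner (U x) y = cinner x (V y)" "U \<circ> V = id" "V \<circ> U = id"
    unfolding unitary_op_def bounded_op_def is_adjoint_def by blast
  then show ?thesis using that by (metis comp_apply id_apply)
qed

lemma bb_from_spec:
  fixes T :: "'a::chilbert_space \<Rightarrow> 'a"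
  assumes "l \<notin> op_spectrum T"
  shows "\<exists>L>0. \<forall>x. norm x \<le> L * norm (T x - scaleC l x)"
proof -
  from assms obtain W where W: "bounded_op W" "W \<circ> (\<lambda>x. T x - scaleC l x) = id"
    unfolding op_spectrum_def by blast
  then obtain K where K: "\<And>x. norm (W x) \<le> norm x * K" unfolding bounded_op_def by blast
  show ?thesis
  proof (intro exI[of _ "max K 1"] conjI allI)
    fix x
    have "x = W (T x - scaleC l x)" using W(2) by (metis comp_apply id_apply)
    then have "norm x \<le> norm (T x - scaleC l x) * K" using K by metis
    also have "\<dots> \<le> norm (T x - scaleC l x) * max K 1" by (simp add: mult_left_mono)
    finally show "norm x \<le> max K 1 * norm (T x - scaleC l x)" by (simp add: mult.commute)
  qed simp
qed

lemma coer:
  fixes U S1 :: "'a::chilbert_space \<Rightarrow> 'a"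
  assumes S1add: "\<And>x y. S1 (x+y) = S1 x + S1 y" and S1sc: "\<And>c x. S1 (scaleC c x) = scaleC c (S1 x)"
    and S1adj: "\<And>x y. cinner (S1 x) y = cinner x (S1 y)" and S1S1: "\<And>x. S1 (S1 x) = x"
    and S1n: "\<And>x. norm (S1 x) = norm x"
    and d: "\<delta> > 0" and c1: "\<And>x. \<delta> * (norm x)\<^sup>2 \<le> Re (b1 * cinner x (U x))"
    and c2: "\<And>x. \<delta> * (norm x)\<^sup>2 \<le> Re (- \<i> * b1 * cinner x (U x))"
    and l: "cmod l = 1" and b: "cmod b1 = 1" and pq: "Re (b1 * l) * Im (b1 * l) \<le> 0"
  shows "\<exists>L>0. \<forall>x. norm x \<le> L * norm (S1 (U x) - scaleC l x)"
proof -
  define p where "p = Re (b1 * l)"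
  define q where "q = Im (b1 * l)"
  have pq1: "p\<^sup>2 + q\<^sup>2 = 1" unfolding p_def q_def using l b
    by (metis cmod_power2 norm_mult mult_1_left power_one)
  have "p\<^sup>2 \<le> 1" "q\<^sup>2 \<le> 1" using pq1 zero_le_power2[of q] zero_le_power2[of p] by linarith+
  then have ap: "\<bar>p\<bar> \<le> 1" "\<bar>q\<bar> \<le> 1" by (simp_all add: abs_square_le_1)
  have apq: "1 \<le> \<bar>p\<bar> + \<bar>q\<bar>"
  proof -
    have "1 = \<bar>p\<bar>\<^sup>2 + \<bar>q\<bar>\<^sup>2" using pq1 by simp
    also have "\<dots> \<le> (\<bar>p\<bar> + \<bar>q\<bar>)\<^sup>2" by (simp add: power2_sum)
    finally have "1\<^sup>2 \<le> (\<bar>p\<bar> + \<bar>q\<bar>)\<^sup>2" by simp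
    then show ?thesis by (rule power2_le_imp_le) simp
  qed
  define \<beta> where "\<beta> = complex_of_real \<bar>q\<bar> * b1 + complex_of_real \<bar>p\<bar> * (- \<i> * b1)"
  have Rbl: "Re (\<beta> * l) = 0"
  proof -
    have "Re (\<beta> * l) = \<bar>q\<bar> * p + \<bar>p\<bar> * q" unfolding \<beta>_def p_def q_def
      by (simp add: algebra_simps)
    also have "\<dots> = 0" using pq unfolding p_def[symmetric] q_def[symmetric]
      by (cases "p \<ge> 0"; cases "q \<ge> 0") (auto simp: abs_if mult_le_0_iff algebra_simps)
    finally show ?thesis .
  qed
  have nb: "cmod \<beta> \<le> 2"
  proof -
    have "cmod \<beta> \<le> cmod (complex_of_real \<bar>q\<bar> * b1) + cmod (complex_of_real \<bar>p\<bar> * (- \<i> * b1))"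
      unfolding \<beta>_def by (rule norm_triangle_ineq)
    also have "\<dots> = \<bar>q\<bar> + \<bar>p\<bar>" by (simp add: norm_mult b)
    finally show ?thesis using ap by simp
  qed
  have key: "\<delta> * (norm x)\<^sup>2 \<le> 2 * (norm x * norm (S1 (U x) - scaleC l x))" for x
  proof -
    define T where "T = U x - scaleC l (S1 x)"
    define r where "r = cinner x (S1 x)"
    have Imr: "Im r = 0"
    proof -
      have "cnj r = r" unfolding r_def by (metis S1adj cinner_commute)
      then show ?thesis by (metis cnj.simps(2) complex_cnj_cancel_iff Im_complex_of_real Reals_cnj_iff complex_is_Real_iff)
    qed
    have zT: "cinner x T = cinner x (U x) - l * r"
      unfolding T_def r_def by (simp add: cinner_diff_right cinner_scaleC_right)
    have Rblr: "Re (\<beta> * (l * r)) = 0" using Rbl Imr by (simp add: mult.assoc[symmetric])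
    have "Re (\<beta> * cinner x (U x)) = \<bar>q\<bar> * Re (b1 * cinner x (U x)) + \<bar>p\<bar> * Re (- \<i> * b1 * cinner x (U x))"
      unfolding \<beta>_def by (simp add: algebra_simps)
    also have "\<dots> \<ge> \<bar>q\<bar> * (\<delta> * (norm x)\<^sup>2) + \<bar>p\<bar> * (\<delta> * (norm x)\<^sup>2)"
      using c1[of x] c2[of x] by (intro add_mono mult_left_mono) auto
    finally have "(\<bar>q\<bar> + \<bar>p\<bar>) * (\<delta> * (norm x)\<^sup>2) \<le> Re (\<beta> * cinner x (U x))"
      by (simp add: algebra_simps)
    moreover have "1 * (\<delta> * (norm x)\<^sup>2) \<le> (\<bar>q\<bar> + \<bar>p\<bar>) * (\<delta> * (norm x)\<^sup>2)"
      using apq d by (intro mult_right_mono) auto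
    then have "\<delta> * (norm x)\<^sup>2 \<le> (\<bar>q\<bar> + \<bar>p\<bar>) * (\<delta> * (norm x)\<^sup>2)" by simp
    ultimately have "\<delta> * (norm x)\<^sup>2 \<le> Re (\<beta> * cinner x T)"
      unfolding zT using Rblr by (simp add: right_diff_distrib)
    also have "\<dots> \<le> cmod (\<beta> * cinner x T)" by (rule complex_Re_le_cmod)
    also have "\<dots> = cmod \<beta> * cmod (cinner x T)" by (rule norm_mult)
    also have "\<dots> \<le> 2 * (norm x * norm T)"
      using nb cs[of x T] by (intro mult_mono) auto
    also have "norm T = norm (S1 (U x) - scaleC l x)"
    proof -
      have "S1 T = S1 (U x) - scaleC l x" unfolding T_def by (simp add: lin_diff[OF S1add] S1sc S1S1)
      then show ?thesis by (metis S1n)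
    qed
    finally show ?thesis .
  qed
  show ?thesis
  proof (intro exI[of _ "2 / \<delta>"] conjI allI)
    show "0 < 2 / \<delta>" using d by simp
    fix x
    show "norm x \<le> 2 / \<delta> * norm (S1 (U x) - scaleC l x)"
    proof (cases "x = 0")
      case True then show ?thesis using d by simp
    next
      case False
      then have nx: "norm x > 0" by simp
      have "\<delta> * norm x * norm x \<le> 2 * norm (S1 (U x) - scaleC l x) * norm x"
        using key[of x] by (simp add: power2_eq_square algebra_simps)
      then have "\<delta> * norm x \<le> 2 * norm (S1 (U x) - scaleC l x)" using nx by simp
      then show ?thesis using d by (simp add: field_simps)
    qed
  qed
qed



theorem proposition4p5:
  fixes U :: "'a::chilbert_space \<Rightarrow> 'a" and k :: nat
  assumes "\<exists>x::'a. x \<noteq> 0"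
    and "unitary_op U"
    and "k \<in> {1, 2, 3, 4}"
    and "op_spectrum U \<subseteq> arcC k"
  shows "\<not> (\<exists>S1 S2 S3. symmetry_op S1 \<and> symmetry_op S2 \<and> symmetry_op S3 \<and> U = S1 \<circ> S2 \<circ> S3)"
proof
  assume "\<exists>S1 S2 S3. symmetry_op S1 \<and> symmetry_op S2 \<and> symmetry_op S3 \<and> U = S1 \<circ> S2 \<circ> S3"
  then obtain S1 S2 S3 where S: "symmetry_op S1" "symmetry_op S2" "symmetry_op S3"
    and UU: "U = S1 \<circ> S2 \<circ> S3" by blast
  obtain x0 :: 'a where x0: "x0 \<noteq> 0" using assms(1) by blast
  obtain V where Uadd: "\<And>x y. U (x+y) = U x + U y" and Usc: "\<And>c x. U (scaleC c x) = scaleC c (U x)"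
    and Uadj: "\<And>x y. cinner (U x) y = cinner x (V y)" and UV: "\<And>x. U (V x) = x" and VU: "\<And>x. V (U x) = x"
    using unit_facts[OF assms(2)] by blast
  note S1f = sym_facts[OF S(1)] and S2f = sym_facts[OF S(2)] and S3f = sym_facts[OF S(3)]
  define b1 where "b1 = cnj (\<i>^(k-1))"
  have b1n: "cmod b1 = 1" and b1sq: "b1\<^sup>2 = 1 \<or> b1\<^sup>2 = -1" unfolding b1_def using b1_props[OF assms(3)] by auto
  have arc: "Re (b1 * l) > 0 \<and> Re (- \<i> * b1 * l) > 0" if "l \<in> arcC k" for l
    unfolding b1_def using arc_pos[OF assms(3) that] .
  have hbU: "\<exists>L>0. \<forall>x. norm x \<le> L * norm (U x - scaleC l x)" if "l \<notin> arcC k" for l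
    using bb_from_spec[of l U] that assms(4) by blast
  obtain d1 where d1: "d1 > 0" "\<And>x. d1 * (norm x)\<^sup>2 \<le> Re (b1 * cinner x (U x))"
    using re_part_pos[OF Uadd Usc Uadj UV VU b1n, of] hbU arc by (smt (verit))
  have b2n: "cmod (- \<i> * b1) = 1" using b1n by (simp add: norm_mult)
  obtain d2 where d2: "d2 > 0" "\<And>x. d2 * (norm x)\<^sup>2 \<le> Re (- \<i> * b1 * cinner x (U x))"
    using re_part_pos[OF Uadd Usc Uadj UV VU b2n, of] hbU arc by (smt (verit))
  define d where "d = min d1 d2"
  have d: "d > 0" "\<And>x. d * (norm x)\<^sup>2 \<le> Re (b1 * cinner x (U x))"
    "\<And>x. d * (norm x)\<^sup>2 \<le> Re (- \<i> * b1 * cinner x (U x))"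
  proof -
    show "d > 0" using d1 d2 by (simp add: d_def)
    fix x :: 'a
    have "d * (norm x)\<^sup>2 \<le> d1 * (norm x)\<^sup>2" "d * (norm x)\<^sup>2 \<le> d2 * (norm x)\<^sup>2"
      unfolding d_def by (intro mult_right_mono; simp)+
    then show "d * (norm x)\<^sup>2 \<le> Re (b1 * cinner x (U x))" "d * (norm x)\<^sup>2 \<le> Re (- \<i> * b1 * cinner x (U x))"
      using d1(2)[of x] d2(2)[of x] by linarith+
  qed
  define W where "W x = S2 (S3 x)" for x
  define Ws where "Ws x = S3 (S2 x)" for x
  have S1U: "S1 (U x) = W x" for x unfolding UU W_def by (simp add: S1f(4))
  have coerW: "\<exists>L>0. \<forall>x. norm x \<le> L * norm (W x - scaleC l x)"
    if "cmod l = 1" "Re (b1 * l) * Im (b1 * l) \<le> 0" for l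
    using coer[OF S1f(1-5) d(1-3) that(1) b1n that(2)] unfolding S1U .
  have Wn: "norm (W x) = norm x" for x unfolding W_def by (simp add: S2f(5) S3f(5))
  have bbW: "\<exists>L>0. \<forall>x. norm x \<le> L * norm (W x - scaleC l x)" if l: "cmod l = 1" for l
  proof (cases "Re (b1 * l) * Im (b1 * l) \<le> 0")
    case True then show ?thesis using coerW l by blast
  next
    case False
    define \<nu> where "\<nu> = b1 * l"
    have bb: "cnj b1 * b1 = 1" using b1n complex_norm_square[of b1] by (simp add: mult.commute)
    have ll: "l * cnj l = 1" "cnj l * l = 1" using l complex_norm_square[of l] by (simp_all add: mult.commute)
    have "b1 * cnj l = b1\<^sup>2 * cnj \<nu>"
    proof -
      have "b1 * cnj l = b1 * (cnj b1 * b1) * cnj l" using bb by simp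
      also have "\<dots> = b1\<^sup>2 * cnj \<nu>" unfolding \<nu>_def using bb by (simp add: power2_eq_square algebra_simps)
      finally show ?thesis .
    qed
    then have "Re (b1 * cnj l) * Im (b1 * cnj l) = - (Re \<nu> * Im \<nu>)"
      using b1sq by (auto simp: algebra_simps)
    then have neg: "Re (b1 * cnj l) * Im (b1 * cnj l) \<le> 0" using False unfolding \<nu>_def by simp
    obtain L where L: "L > 0" "\<And>x. norm x \<le> L * norm (W x - scaleC (cnj l) x)"
      using coerW[OF _ neg] l by auto
    show ?thesis
    proof (intro exI[of _ L] conjI allI)
      show "L > 0" by fact
      fix x :: 'a
      define E where "E = Ws x - scaleC (cnj l) x"
      have SE: "S2 E = W (S2 x) - scaleC (cnj l) (S2 x)"
        unfolding E_def W_def Ws_def by (simp add: lin_diff[OF S2f(1)] S2f(2) S2f(4))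
      have nE: "norm E = norm (W (S2 x) - scaleC (cnj l) (S2 x))" by (metis SE S2f(5))
      have WE: "W E = x - scaleC (cnj l) (W x)"
        unfolding E_def W_def Ws_def by (simp add: lin_diff[OF S2f(1)] lin_diff[OF S3f(1)] S2f(2) S3f(2) S2f(4) S3f(4))
      have "scaleC (- l) (W E) = W x - scaleC l x"
        unfolding WE by (simp add: scaleC_diff_right scaleC_scaleC scaleC_minus_left ll scaleC_one)
      then have "norm (W x - scaleC l x) = norm E"
        by (metis Wn norm_scaleC l norm_minus_cancel mult_1_left)
      moreover have "norm (S2 x) \<le> L * norm (W (S2 x) - scaleC (cnj l) (S2 x))" by (rule L(2))
      ultimately show "norm x \<le> L * norm (W x - scaleC l x)" using nE S2f(5) by simp
    qed
  qed
  have Wadd: "W (x+y) = W x + W y" for x y unfolding W_def by (simp add: S2f(1) S3f(1))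
  have Wsc: "W (scaleC c x) = scaleC c (W x)" for c x unfolding W_def by (simp add: S2f(2) S3f(2))
  have Wadj: "cinner (W x) y = cinner x (Ws y)" for x y unfolding W_def Ws_def by (simp add: S2f(3) S3f(3))
  have WWs: "W (Ws x) = x" "Ws (W x) = x" for x unfolding W_def Ws_def by (simp_all add: S2f(4) S3f(4))
  obtain e1 where e1: "e1 > 0" "\<And>x. e1 * (norm x)\<^sup>2 \<le> Re (1 * cinner x (W x))"
    using re_part_pos[OF Wadd Wsc Wadj WWs(1) WWs(2), of 1] bbW by auto
  obtain e2 where e2: "e2 > 0" "\<And>x. e2 * (norm x)\<^sup>2 \<le> Re (-1 * cinner x (W x))"
    using re_part_pos[OF Wadd Wsc Wadj WWs(1) WWs(2), of "-1"] bbW by auto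
  have "e1 * (norm x0)\<^sup>2 + e2 * (norm x0)\<^sup>2 \<le> 0" using e1(2)[of x0] e2(2)[of x0] by simp
  moreover have "e1 * (norm x0)\<^sup>2 + e2 * (norm x0)\<^sup>2 > 0" using e1(1) e2(1) x0 by (simp add: add_pos_pos)
  ultimately show False by simp
qed

end
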